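(* Let $\mathcal F'$ be a finite set of structures in $Rel^{cov}(\Delta,\Delta')$. Suppose there exists a finite set of structures $\mathcal D'$ such that $(\mathcal F',\mathcal D')$ is a finite duality in $Rel^{cov}(\Delta,\Delta')$. Then $\Phi(\mathrm{Forb}(\mathcal F'))=\{\Phi(\mathbf A'):\mathbf A'\in\mathrm{Forb}(\mathcal F')\}$ coincides with $CSP(\Phi(\mathcal D'))=\bigcup_{\mathbf D'\in\mathcal D'}CSP(\Phi(\mathbf D'))$. Explicitly: for every $\mathbf A\in Rel(\Delta)$ there exists $\mathbf A'\in Rel(\Delta,\Delta')$ with $\Phi(\mathbf A')=\mathbf A$ and $\mathbf F'\not\to\mathbf A'$ for every $\mathbf F'\in\mathcal F'$ if and only if $\mathbf A\to\Phi(\mathbf D')$ for some $\mathbf D'\in\mathcal D'$.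
   Context: For a finite relational signature $\Delta$, $Rel(\Delta)$ is the class of finite relational structures of signature $\Delta$ with homomorphisms (maps preserving all relations); $\mathbf A\to\mathbf B$ means there is a homomorphism. For disjoint signatures $\Delta,\Delta'$, $Rel(\Delta,\Delta')=Rel(\Delta\cup\Delta')$, and $\Phi:Rel(\Delta,\Delta')\to Rel(\Delta)$ is the forgetful functor deleting the relations of $\Delta'$ (identity on maps). $Rel^{cov}(\Delta,\Delta')$ is the class of structures in $Rel(\Delta,\Delta')$ where all relations in $\Delta'$ have a common arity $r$ and every $r$-tuple of elements belongs to some relation of $\Delta'$, with homomorphisms as morphisms. For a finite set $\mathcal F'$ in a category $\mathcal C$ of structures, $\mathrm{Forb}(\mathcal F')$ is the class of $\mathbf A'\in\mathcal C$ with $\mathbf F'\not\to\mathbf A'$ for all $\mathbf F'\in\mathcal F'$; for a finite set $\mathcal D'$, $CSP(\mathcal D')$ is the class of $\mathbf A'\in\mathcal C$ with $\mathbf A'\to\mathbf D'$ for some $\mathbf D'\in\mathcal D'$. The pair $(\mathcal F',\mathcal D')$ is a finite duality in $\mathcal C$ if $\mathrm{Forb}(\mathcal F')=CSP(\mathcal D')$ in $\mathcal C$. $\Phi(\mathcal D')=\{\Phi(\mathbf D'):\mathbf D'\in\mathcal D'\}$, and $CSP(\Phi(\mathcal D'))$ is taken in $Rel(\Delta)$. *)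

theory Defs
  imports Main
begin

text \<open>A relational structure: a universe and an interpretation of each relation
symbol as a set of tuples (lists). Symbols outside the signature are interpreted
as empty relations.\<close>

record ('a, 'r) struc =
  univ :: "'a set"
  rel  :: "'r \<Rightarrow> 'a list set"

definition is_struct :: "'r set \<Rightarrow> ('r \<Rightarrow> nat) \<Rightarrow> ('a, 'r) struc \<Rightarrow> bool" where
  "is_struct S ar A \<longleftrightarrow> finite (univ A)
     \<and> (\<forall>R\<in>S. \<forall>t\<in>rel A R. length t = ar R \<and> set t \<subseteq> univ A)
     \<and> (\<forall>R. R \<notin> S \<longrightarrow> rel A R = {})"

definition hom :: "'r set \<Rightarrow> ('a, 'r) struc \<Rightarrow> ('b, 'r) struc \<Rightarrow> ('a \<Rightarrow> 'b) \<Rightarrow> bool" where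
  "hom S A B f \<longleftrightarrow> (\<forall>x\<in>univ A. f x \<in> univ B)
     \<and> (\<forall>R\<in>S. \<forall>t\<in>rel A R. map f t \<in> rel B R)"

definition homto :: "'r set \<Rightarrow> ('a, 'r) struc \<Rightarrow> ('b, 'r) struc \<Rightarrow> bool" where
  "homto S A B \<longleftrightarrow> (\<exists>f. hom S A B f)"

text \<open>Rel^cov(Delta, Delta'): structures of signature Delta \<union> Delta', where all
relations of Delta' have the common arity r, and every r-tuple of elements lies in
some relation of Delta'.\<close>
definition is_cov :: "'r set \<Rightarrow> 'r set \<Rightarrow> ('r \<Rightarrow> nat) \<Rightarrow> nat \<Rightarrow> ('a, 'r) struc \<Rightarrow> bool" where
  "is_cov D D' ar r A \<longleftrightarrow> is_struct (D \<union> D') ar A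
     \<and> (\<forall>t. length t = r \<and> set t \<subseteq> univ A \<longrightarrow> (\<exists>R\<in>D'. t \<in> rel A R))"

definition forget :: "'r set \<Rightarrow> ('a, 'r) struc \<Rightarrow> ('a, 'r) struc" where
  "forget D A = \<lparr>univ = univ A, rel = (\<lambda>R. if R \<in> D then rel A R else {})\<rparr>"

definition Forb :: "('a, 'r) struc set \<Rightarrow> 'r set \<Rightarrow> ('b, 'r) struc set \<Rightarrow> ('a, 'r) struc set" where
  "Forb C S F = {A \<in> C. \<forall>F0\<in>F. \<not> homto S F0 A}"

definition CSP :: "('a, 'r) struc set \<Rightarrow> 'r set \<Rightarrow> ('b, 'r) struc set \<Rightarrow> ('a, 'r) struc set" where
  "CSP C S D = {A \<in> C. \<exists>D0\<in>D. homto S A D0}"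

end

theory Submission
  imports Defs
begin

theorem theorem10:
  fixes Delta Delta' :: "'r set" and ar :: "'r \<Rightarrow> nat" and r :: nat
    and F' D' :: "(nat, 'r) struc set"
  assumes "finite Delta" and "finite Delta'" and "Delta \<inter> Delta' = {}"
    and "\<forall>R\<in>Delta'. ar R = r"
    and "finite F'" and "\<forall>F\<in>F'. is_cov Delta Delta' ar r F"
    and "finite D'" and "\<forall>D\<in>D'. is_cov Delta Delta' ar r D"
    and "Forb {A :: (nat, 'r) struc. is_cov Delta Delta' ar r A} (Delta \<union> Delta') F'
         = CSP {A :: (nat, 'r) struc. is_cov Delta Delta' ar r A} (Delta \<union> Delta') D'"
  shows "forget Delta ` Forb {A :: (nat, 'r) struc. is_cov Delta Delta' ar r A} (Delta \<union> Delta') F'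
         = CSP {A :: (nat, 'r) struc. is_struct Delta ar A} Delta (forget Delta ` D')"
proof
  show "forget Delta ` Forb {A :: (nat, 'r) struc. is_cov Delta Delta' ar r A} (Delta \<union> Delta') F'
         \<subseteq> CSP {A :: (nat, 'r) struc. is_struct Delta ar A} Delta (forget Delta ` D')"
  proof
    fix B assume "B \<in> forget Delta ` Forb {A :: (nat, 'r) struc. is_cov Delta Delta' ar r A} (Delta \<union> Delta') F'"
    then obtain A where A: "A \<in> Forb {A :: (nat, 'r) struc. is_cov Delta Delta' ar r A} (Delta \<union> Delta') F'"
      and B: "B = forget Delta A" by auto
    from A assms(9) obtain D0 f where D0: "D0 \<in> D'" and cA: "is_cov Delta Delta' ar r A"
      and f: "hom (Delta \<union> Delta') A D0 f"
      unfolding CSP_def homto_def by auto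
    have "is_struct Delta ar B" using cA unfolding B is_cov_def is_struct_def forget_def by auto
    moreover have "hom Delta B (forget Delta D0) f" using f unfolding B hom_def forget_def by auto
    ultimately show "B \<in> CSP {A :: (nat, 'r) struc. is_struct Delta ar A} Delta (forget Delta ` D')"
      using D0 unfolding CSP_def homto_def by auto
  qed
next
  show "CSP {A :: (nat, 'r) struc. is_struct Delta ar A} Delta (forget Delta ` D')
     \<subseteq> forget Delta ` Forb {A :: (nat, 'r) struc. is_cov Delta Delta' ar r A} (Delta \<union> Delta') F'"
  proof
    fix A :: "(nat,'r) struc"
    assume "A \<in> CSP {A :: (nat, 'r) struc. is_struct Delta ar A} Delta (forget Delta ` D')"
    then obtain D0 f where sA: "is_struct Delta ar A" and D0: "D0 \<in> D'"
      and f: "hom Delta A (forget Delta D0) f"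
      unfolding CSP_def homto_def by auto
    have cD: "is_cov Delta Delta' ar r D0" using D0 assms(8) by auto
    define A' :: "(nat,'r) struc" where "A' = \<lparr>univ = univ A, rel = (\<lambda>R. if R \<in> Delta then rel A R
       else if R \<in> Delta' then {t. set t \<subseteq> univ A \<and> length t = ar R \<and> map f t \<in> rel D0 R} else {})\<rparr>"
    have fu: "\<forall>x\<in>univ A. f x \<in> univ D0" using f unfolding hom_def forget_def by auto
    have cA': "is_cov Delta Delta' ar r A'"
      unfolding is_cov_def
    proof (intro conjI allI impI)
      show "is_struct (Delta \<union> Delta') ar A'"
        using sA unfolding is_struct_def A'_def by auto
    next
      fix t :: "nat list" assume t: "length t = r \<and> set t \<subseteq> univ A'"
      hence "length (map f t) = r \<and> set (map f t) \<subseteq> univ D0" using fu unfolding A'_def by auto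
      then obtain R where R: "R \<in> Delta'" "map f t \<in> rel D0 R" using cD unfolding is_cov_def by blast
      have "R \<notin> Delta" using R assms(3) by auto
      thus "\<exists>R\<in>Delta'. t \<in> rel A' R" using R t assms(4) unfolding A'_def by auto
    qed
    have "hom (Delta \<union> Delta') A' D0 f"
      using f fu unfolding hom_def forget_def A'_def by auto
    hence "A' \<in> CSP {A :: (nat, 'r) struc. is_cov Delta Delta' ar r A} (Delta \<union> Delta') D'"
      using cA' D0 unfolding CSP_def homto_def by auto
    hence "A' \<in> Forb {A :: (nat, 'r) struc. is_cov Delta Delta' ar r A} (Delta \<union> Delta') F'"
      using assms(9) by simp
    moreover have "forget Delta A' = A"
    proof -
      have "(\<lambda>R. if R \<in> Delta then rel A' R else {}) = rel A"
      proof
        fix R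
        have e: "\<forall>R. R \<notin> Delta \<longrightarrow> rel A R = {}" using sA unfolding is_struct_def by blast
        show "(if R \<in> Delta then rel A' R else {}) = rel A R"
          using e[rule_format, of R] by (cases "R \<in> Delta") (simp_all add: A'_def)
      qed
      thus ?thesis unfolding forget_def by (simp add: A'_def)
    qed
    ultimately show "A \<in> forget Delta ` Forb {A :: (nat, 'r) struc. is_cov Delta Delta' ar r A} (Delta \<union> Delta') F'"
      by (metis image_eqI)
  qed
qed

end
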